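(* For every $\varepsilon\in[0,N)$, writing $C(0,r)=\{\zeta\in\mathbb C:|\zeta|=r\}$ and $F(\zeta)=\frac1N\mathrm{tr}\Big(\frac{1-\zeta}{N-\zeta(N-2+2Q)}\Big)$, \[ \min_{\zeta\in C(0,1-\varepsilon/N)}|F(\zeta)|=\frac1{N^2}\mathrm{tr}\left(\frac{\varepsilon}{2-2Q+\varepsilon-\frac{\varepsilon}N(2-2Q)}\right),\qquad \max_{\zeta\in C(0,1-\varepsilon/N)}|F(\zeta)|=\frac1{N^2}\mathrm{tr}\left(\frac{2-\frac\varepsilon N}{1+(1-\frac\varepsilon N)(1-\frac2N+\frac{2Q}N)}\right), \] and the minimum and maximum are attained at $\zeta=1-\varepsilon/N$ and $\zeta=-(1-\varepsilon/N)$ respectively. Here, for each eigenvalue $q$ of $Q$, the scalar function $\zeta\mapsto\frac{1-\zeta}{N-\zeta(N-2+2q)}$ is defined at its removable singularity in the natural way (for $q=1$ it equals the constant $1/N$), and when $\varepsilon=0$ the right-hand side of the minimum formula is read as $1/N^2$.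
   Context: $E$ is a finite set with $N=\#E>8$ elements; $Q$ is an irreducible stochastic matrix on $E$ with $Q(x,y)=Q(y,x)$ for all $x,y$ and $\mathrm{tr}(Q)=0$. For a function $f$ defined on the spectrum of $Q$ (which lies in $[-1,1]$), $f(Q)$ is defined by functional calculus, so $\mathrm{tr}(f(Q))=\sum_q f(q)$ over eigenvalues $q$ of $Q$ counted with multiplicity; fractions of the form $\frac{a(Q)}{b(Q)}$ mean $f(Q)$ with $f(q)=a(q)/b(q)$. *)

theory Defs
  imports "Jordan_Normal_Form.Char_Poly"
begin

text \<open>The state space E is identified with {0..<N}; Q is an N x N real matrix.\<close>

definition stochastic_mat :: "nat \<Rightarrow> real mat \<Rightarrow> bool" where
  "stochastic_mat N Q \<longleftrightarrow> Q \<in> carrier_mat N N \<and>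
     (\<forall>i<N. \<forall>j<N. Q $$ (i,j) \<ge> 0) \<and> (\<forall>i<N. (\<Sum>j<N. Q $$ (i,j)) = 1)"

definition symmetric_mat :: "nat \<Rightarrow> real mat \<Rightarrow> bool" where
  "symmetric_mat N Q \<longleftrightarrow> (\<forall>i<N. \<forall>j<N. Q $$ (i,j) = Q $$ (j,i))"

definition irreducible_mat :: "nat \<Rightarrow> real mat \<Rightarrow> bool" where
  "irreducible_mat N Q \<longleftrightarrow> (\<forall>i<N. \<forall>j<N. \<exists>k. (Q ^\<^sub>m k) $$ (i,j) > 0)"

definition mat_trace :: "nat \<Rightarrow> real mat \<Rightarrow> real" where
  "mat_trace N Q = (\<Sum>i<N. Q $$ (i,i))"

text \<open>Trace of f(Q) by functional calculus: sum of f over the eigenvalues of Q,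
  counted with (algebraic) multiplicity as roots of the characteristic polynomial.
  For a real symmetric matrix all eigenvalues are real.\<close>
definition tr_fun :: "real mat \<Rightarrow> (real \<Rightarrow> 'b::comm_semiring_1) \<Rightarrow> 'b" where
  "tr_fun Q f = (\<Sum>q\<in>{q. poly (char_poly Q) q = 0}. of_nat (order q (char_poly Q)) * f q)"

definition Fq :: "nat \<Rightarrow> real \<Rightarrow> complex \<Rightarrow> complex" where
  "Fq N q z = (if q = 1 then 1 / of_nat N
               else (1 - z) / (of_nat N - z * (of_nat N - 2 + 2 * complex_of_real q)))"

definition F :: "nat \<Rightarrow> real mat \<Rightarrow> complex \<Rightarrow> complex" where
  "F N Q z = tr_fun Q (\<lambda>q. Fq N q z) / of_nat N"

definition min_value :: "nat \<Rightarrow> real mat \<Rightarrow> real \<Rightarrow> real" where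
  "min_value N Q \<epsilon> = (if \<epsilon> = 0 then 1 / (real N)^2
     else tr_fun Q (\<lambda>q. \<epsilon> / (2 - 2*q + \<epsilon> - (\<epsilon> / real N) * (2 - 2*q))) / (real N)^2)"

definition max_value :: "nat \<Rightarrow> real mat \<Rightarrow> real \<Rightarrow> real" where
  "max_value N Q \<epsilon> = tr_fun Q (\<lambda>q. (2 - \<epsilon> / real N) /
      (1 + (1 - \<epsilon> / real N) * (1 - 2 / real N + 2 * q / real N))) / (real N)^2"

end

theory Submission
  imports Defs
begin


lemma maxcomp:
  fixes B :: "real mat" and v :: "real vec"
  assumes B: "B \<in> carrier_mat n n" and nn: "\<forall>i<n. \<forall>j<n. B$$(i,j) \<ge> 0"
  and rs: "\<forall>i<n. (\<Sum>j<n. B$$(i,j)) \<le> 1"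
  and v: "v \<in> carrier_vec n" and v0: "v \<noteq> 0\<^sub>v n" and ev: "B *\<^sub>v v = l \<cdot>\<^sub>v v"
  shows "\<exists>M>0. (\<forall>k<n. \<bar>v$k\<bar> \<le> M) \<and> (\<exists>j<n. \<bar>v$j\<bar> = M) \<and> \<bar>l\<bar> \<le> 1 \<and>
     (1 \<le> \<bar>l\<bar> \<longrightarrow> (\<forall>j<n. \<bar>v$j\<bar> = M \<longrightarrow> (\<Sum>k<n. B$$(j,k)) = 1 \<and> (\<forall>k<n. B$$(j,k) > 0 \<longrightarrow> \<bar>v$k\<bar> = M)))"
proof -
  have n0: "n > 0"
  proof (rule ccontr)
    assume "\<not> n > 0" then have "n = 0" by simp
    with v v0 show False by auto
  qed
  define M where "M = Max ((\<lambda>k. \<bar>v$k\<bar>) ` {..<n})"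
  have fin: "finite ((\<lambda>k. \<bar>v$k\<bar>) ` {..<n})" by simp
  have Mge: "\<forall>k<n. \<bar>v$k\<bar> \<le> M" unfolding M_def using fin by (auto intro: Max_ge)
  have "M \<in> ((\<lambda>k. \<bar>v$k\<bar>) ` {..<n})" unfolding M_def using n0 by (intro Max_in) auto
  then obtain j0 where j0: "j0 < n" "\<bar>v$j0\<bar> = M" by auto
  have "\<exists>k<n. v$k \<noteq> 0"
  proof (rule ccontr)
    assume "\<not> ?thesis"
    then have "v = 0\<^sub>v n" using v by (intro eq_vecI) auto
    with v0 show False by simp
  qed
  then obtain k where "k<n" "v$k \<noteq> 0" by auto
  with Mge have Mpos: "M > 0" by force
  have key: "\<bar>l\<bar> * M \<le> (\<Sum>k<n. B$$(j,k) * \<bar>v$k\<bar>)"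
        "(\<Sum>k<n. B$$(j,k) * \<bar>v$k\<bar>) \<le> M * (\<Sum>k<n. B$$(j,k))"
        "M * (\<Sum>k<n. B$$(j,k)) \<le> M"
    if j: "j < n" "\<bar>v$j\<bar> = M" for j
  proof -
    have "(B *\<^sub>v v) $ j = (\<Sum>k<n. B$$(j,k) * v$k)"
      using B v j by (auto simp: scalar_prod_def lessThan_atLeast0)
    then have "l * v$j = (\<Sum>k<n. B$$(j,k) * v$k)" using ev j v by (metis carrier_vecD index_smult_vec(1))
    then have "\<bar>l\<bar> * M = \<bar>\<Sum>k<n. B$$(j,k) * v$k\<bar>" using j by (metis abs_mult)
    also have "\<dots> \<le> (\<Sum>k<n. \<bar>B$$(j,k) * v$k\<bar>)" by (rule sum_abs)
    also have "\<dots> = (\<Sum>k<n. B$$(j,k) * \<bar>v$k\<bar>)" using nn j by (intro sum.cong) (auto simp: abs_mult)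
    finally show "\<bar>l\<bar> * M \<le> (\<Sum>k<n. B$$(j,k) * \<bar>v$k\<bar>)" .
    have "(\<Sum>k<n. B$$(j,k) * \<bar>v$k\<bar>) \<le> (\<Sum>k<n. B$$(j,k) * M)"
      using nn j Mge by (intro sum_mono mult_left_mono) auto
    also have "\<dots> = M * (\<Sum>k<n. B$$(j,k))" by (simp add: sum_distrib_left mult.commute)
    finally show "(\<Sum>k<n. B$$(j,k) * \<bar>v$k\<bar>) \<le> M * (\<Sum>k<n. B$$(j,k))" .
    show "M * (\<Sum>k<n. B$$(j,k)) \<le> M" using rs j Mpos by (simp add: mult_le_cancel_left1)
  qed
  have l1: "\<bar>l\<bar> \<le> 1"
  proof -
    have "\<bar>l\<bar> * M \<le> 1 * M" using key[OF j0] by linarith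
    then show ?thesis using Mpos by (simp add: mult_le_cancel_right)
  qed
  have rest: "(\<Sum>k<n. B$$(j,k)) = 1 \<and> (\<forall>k<n. B$$(j,k) > 0 \<longrightarrow> \<bar>v$k\<bar> = M)"
    if L: "1 \<le> \<bar>l\<bar>" and j: "j < n" "\<bar>v$j\<bar> = M" for j
  proof -
    note kk = key[OF j]
    have "M \<le> \<bar>l\<bar> * M" using L Mpos by simp
    then have e1: "M * (\<Sum>k<n. B$$(j,k)) = M" and e2: "(\<Sum>k<n. B$$(j,k) * \<bar>v$k\<bar>) = M * (\<Sum>k<n. B$$(j,k))"
      using kk by linarith+
    from e1 Mpos have s1: "(\<Sum>k<n. B$$(j,k)) = 1" by simp
    have "(\<Sum>k<n. B$$(j,k) * (M - \<bar>v$k\<bar>)) = 0"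
      using e2 by (simp add: algebra_simps sum_subtractf sum_distrib_left sum_distrib_right)
    moreover have "\<forall>k\<in>{..<n}. B$$(j,k) * (M - \<bar>v$k\<bar>) \<ge> 0" using nn j Mge by auto
    ultimately have z: "\<forall>k\<in>{..<n}. B$$(j,k) * (M - \<bar>v$k\<bar>) = 0"
      using sum_nonneg_eq_0_iff[of "{..<n}" "\<lambda>k. B$$(j,k) * (M - \<bar>v$k\<bar>)"] by auto
    have "\<forall>k<n. B$$(j,k) > 0 \<longrightarrow> \<bar>v$k\<bar> = M"
    proof (intro allI impI)
      fix k assume "k < n" "B$$(j,k) > 0"
      moreover have "B$$(j,k) * (M - \<bar>v$k\<bar>) = 0" using z \<open>k<n\<close> by blast
      ultimately have "M - \<bar>v$k\<bar> = 0" by simp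
      then show "\<bar>v$k\<bar> = M" by simp
    qed
    then show ?thesis using s1 by blast
  qed
  show ?thesis using Mpos Mge j0 l1 rest by blast
qed

lemma closed_pow:
  fixes Q :: "real mat"
  assumes Q: "Q \<in> carrier_mat n n" and S: "S \<subseteq> {..<n}"
  and cl: "\<forall>s\<in>S. \<forall>t<n. Q$$(s,t) \<noteq> 0 \<longrightarrow> t \<in> S"
  and s: "s \<in> S" and t: "t < n" "t \<notin> S"
  shows "(Q ^\<^sub>m k) $$ (s,t) = 0"
  using t
proof (induction k arbitrary: t)
  case 0
  then show ?case using Q S s by auto
next
  case (Suc k)
  have Pk: "Q ^\<^sub>m k \<in> carrier_mat n n" using Q by simp
  have sn: "s < n" using S s by auto
  have "(Q ^\<^sub>m Suc k) $$ (s,t) = (\<Sum>u\<in>{0..<n}. (Q ^\<^sub>m k)$$(s,u) * Q$$(u,t))"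
    using Pk Q sn Suc.prems by (simp add: scalar_prod_def)
  also have "\<dots> = 0"
  proof (intro sum.neutral ballI)
    fix u assume u: "u \<in> {0..<n}"
    show "(Q ^\<^sub>m k)$$(s,u) * Q$$(u,t) = 0"
    proof (cases "u \<in> S")
      case True
      then have "Q$$(u,t) = 0" using cl Suc.prems by blast
      then show ?thesis by simp
    next
      case False
      then show ?thesis using Suc.IH[of u] u by simp
    qed
  qed
  finally show ?case .
qed



lemma root_bound:
  assumes st: "stochastic_mat N Q" and r: "poly (char_poly Q) q = 0"
  shows "\<bar>q\<bar> \<le> 1"
proof -
  have Q: "Q \<in> carrier_mat N N" using st unfolding stochastic_mat_def by auto
  have "eigenvalue Q q" using eigenvalue_root_char_poly[OF Q] r by simp
  then obtain v where "eigenvector Q v q" unfolding eigenvalue_def by auto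
  then have v: "v \<in> carrier_vec N" "v \<noteq> 0\<^sub>v N" "Q *\<^sub>v v = q \<cdot>\<^sub>v v"
    using Q unfolding eigenvector_def by auto
  show ?thesis using maxcomp[OF Q _ _ v] st unfolding stochastic_mat_def by auto
qed

lemma delete_no_root:
  assumes st: "stochastic_mat N Q" and irr: "irreducible_mat N Q"
  and i: "i < N" and x: "1 \<le> x"
  shows "poly (char_poly (mat_delete Q i i)) x \<noteq> 0"
proof
  assume r: "poly (char_poly (mat_delete Q i i)) x = 0"
  have Q: "Q \<in> carrier_mat N N" using st unfolding stochastic_mat_def by auto
  obtain n where Nn: "N = Suc n" using i by (cases N) auto
  define B where "B = mat_delete Q i i"
  have B: "B \<in> carrier_mat n n" using Q Nn unfolding B_def mat_delete_def by auto
  have Bidx: "B $$ (a,b) = Q $$ (insert_index i a, insert_index i b)" if "a < n" "b < n" for a b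
    using mat_delete_index[of Q n i i a b] Q Nn i that unfolding B_def by auto
  have insn: "insert_index i a < N" if "a < n" for a using that Nn unfolding insert_index_def by auto
  have rowsum: "(\<Sum>b<n. B$$(a,b)) = 1 - Q$$(insert_index i a, i)" if a: "a < n" for a
  proof -
    have img: "insert_index i ` {..<n} = {..<N} - {i}"
      using insert_index_image[of i n] i Nn by (simp add: lessThan_atLeast0)
    have inj: "inj_on (insert_index i) {..<n}"
      by (rule inj_onI) (metis delete_insert_index)
    have "(\<Sum>b<n. B$$(a,b)) = (\<Sum>b<n. Q$$(insert_index i a, insert_index i b))"
      using Bidx a by simp
    also have "\<dots> = (\<Sum>t\<in>insert_index i ` {..<n}. Q$$(insert_index i a, t))"
      using sum.reindex[OF inj, of "\<lambda>t. Q$$(insert_index i a, t)"] by simp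
    also have "\<dots> = (\<Sum>t\<in>{..<N} - {i}. Q$$(insert_index i a, t))" using img by simp
    also have "\<dots> = (\<Sum>t<N. Q$$(insert_index i a, t)) - Q$$(insert_index i a, i)"
      using i by (simp add: sum_diff1)
    also have "(\<Sum>t<N. Q$$(insert_index i a, t)) = 1" using st insn[OF a] unfolding stochastic_mat_def by auto
    finally show ?thesis .
  qed
  have nn: "\<forall>a<n. \<forall>b<n. B$$(a,b) \<ge> 0" using Bidx insn st unfolding stochastic_mat_def by auto
  have rs: "\<forall>a<n. (\<Sum>b<n. B$$(a,b)) \<le> 1" using rowsum insn st i unfolding stochastic_mat_def by auto
  have "eigenvalue B x" using eigenvalue_root_char_poly[OF B] r unfolding B_def by simp
  then obtain v where "eigenvector B v x" unfolding eigenvalue_def by auto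
  then have v: "v \<in> carrier_vec n" "v \<noteq> 0\<^sub>v n" "B *\<^sub>v v = x \<cdot>\<^sub>v v"
    using B unfolding eigenvector_def by auto
  from maxcomp[OF B nn rs v] x obtain M where
    M: "M > 0" "\<exists>j<n. \<bar>v$j\<bar> = M"
    and cl: "\<forall>j<n. \<bar>v$j\<bar> = M \<longrightarrow> (\<Sum>k<n. B$$(j,k)) = 1 \<and> (\<forall>k<n. B$$(j,k) > 0 \<longrightarrow> \<bar>v$k\<bar> = M)"
    by auto
  define S where "S = {t. t < N \<and> t \<noteq> i \<and> \<bar>v $ delete_index i t\<bar> = M}"
  have delidx: "delete_index i t < n" if "t < N" "t \<noteq> i" for t
    using that Nn i unfolding delete_index_def by auto
  have SN: "S \<subseteq> {..<N}" unfolding S_def by auto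
  have clS: "\<forall>s\<in>S. \<forall>t<N. Q$$(s,t) \<noteq> 0 \<longrightarrow> t \<in> S"
  proof (intro ballI allI impI)
    fix s t assume s: "s \<in> S" and t: "t < N" and q: "Q$$(s,t) \<noteq> 0"
    define a where "a = delete_index i s"
    have a: "a < n" "insert_index i a = s" "\<bar>v$a\<bar> = M"
      using s delidx insert_delete_index[of s i] unfolding S_def a_def by auto
    from cl a have c1: "(\<Sum>k<n. B$$(a,k)) = 1" and c2: "\<forall>k<n. B$$(a,k) > 0 \<longrightarrow> \<bar>v$k\<bar> = M"
      by auto
    have "Q$$(s,i) = 0" using rowsum[OF a(1)] c1 a(2) by simp
    then have ti: "t \<noteq> i" using q by auto
    define b where "b = delete_index i t"
    have b: "b < n" "insert_index i b = t" using delidx[OF t ti] insert_delete_index[OF ti] unfolding b_def by auto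
    have "Q$$(s,t) \<ge> 0" using st s t SN unfolding stochastic_mat_def by auto
    with q have "B$$(a,b) > 0" using Bidx[OF a(1) b(1)] a b by simp
    with c2 b have "\<bar>v$b\<bar> = M" by auto
    then show "t \<in> S" unfolding S_def b_def using t ti by auto
  qed
  from M obtain j where j: "j < n" "\<bar>v$j\<bar> = M" by auto
  define s where "s = insert_index i j"
  have sS: "s \<in> S" unfolding S_def s_def using j insn by auto
  have iS: "i \<notin> S" unfolding S_def by auto
  from irr obtain k where "(Q ^\<^sub>m k) $$ (s,i) > 0" unfolding irreducible_mat_def using sS SN i by blast
  moreover have "(Q ^\<^sub>m k) $$ (s,i) = 0" by (rule closed_pow[OF Q SN clS sS i iS])
  ultimately show False by simp
qed

lemma monic_pos:
  fixes p :: "real poly"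
  assumes lc: "lead_coeff p = 1" and nr: "\<forall>x\<ge>1. poly p x \<noteq> 0"
  shows "poly p 1 > 0"
proof (rule ccontr)
  assume "\<not> poly p 1 > 0"
  then have neg: "poly p 1 < 0" using nr by force
  obtain n where n: "\<forall>x\<ge>n. poly p x \<ge> 1" using poly_pinfty_gt_lc[of p] lc by auto
  define b where "b = max n 2"
  have "poly p b \<ge> 1" using n unfolding b_def by simp
  then have "poly p b > 0" by simp
  moreover have "1 < b" unfolding b_def by simp
  ultimately obtain x where "1 < x" "x < b" "poly p x = 0" using poly_IVT_pos[of 1 b p] neg by blast
  then show False using nr by auto
qed

lemma order_one:
  assumes st: "stochastic_mat N Q" and irr: "irreducible_mat N Q" and N: "N > 0"
  shows "order 1 (char_poly Q) = 1"
proof -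
  have Q: "Q \<in> carrier_mat N N" using st unfolding stochastic_mat_def by auto
  have p0: "char_poly Q \<noteq> 0" using degree_monic_char_poly[OF Q] by auto
  have ev: "eigenvector Q (vec N (\<lambda>_. 1::real)) 1"
    unfolding eigenvector_def carrier_matD(1)[OF Q]
  proof (intro conjI)
    show "vec N (\<lambda>_. 1::real) \<noteq> 0\<^sub>v N" proof
      assume "vec N (\<lambda>_. 1::real) = 0\<^sub>v N"
      then have "vec N (\<lambda>_. 1::real) $ 0 = (0\<^sub>v N :: real vec) $ 0" by simp
      then show False using N by simp
    qed
    show "Q *\<^sub>v vec N (\<lambda>_. 1::real) = 1 \<cdot>\<^sub>v vec N (\<lambda>_. 1::real)"
    proof (rule eq_vecI)
      fix j assume "j < dim_vec (1 \<cdot>\<^sub>v vec N (\<lambda>_. 1::real))"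
      then have j: "j < N" by simp
      have "(Q *\<^sub>v vec N (\<lambda>_. 1::real)) $ j = (\<Sum>k<N. Q$$(j,k))"
        using Q j by (auto simp: scalar_prod_def lessThan_atLeast0)
      then show "(Q *\<^sub>v vec N (\<lambda>_. 1::real)) $ j = (1 \<cdot>\<^sub>v vec N (\<lambda>_. 1::real)) $ j" using st j unfolding stochastic_mat_def by simp
    qed (use Q in simp)
  qed (use Q in simp)
  then have r1: "poly (char_poly Q) 1 = 0"
    using eigenvalue_root_char_poly[OF Q] unfolding eigenvalue_def by auto
  have "poly (pderiv (char_poly Q)) 1 = (\<Sum>i<N. poly (char_poly (mat_delete Q i i)) 1)"
    by (simp add: pderiv_char_poly[OF Q] poly_sum)
  also have "\<dots> > 0"
  proof (rule sum_pos)
    show "finite {..<N}" by simp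
    show "{..<N} \<noteq> {}" using N by auto
    fix i assume i: "i \<in> {..<N}"
    have D: "mat_delete Q i i \<in> carrier_mat (N-1) (N-1)" using mat_delete_carrier[OF Q] by simp
    show "poly (char_poly (mat_delete Q i i)) 1 > 0"
      by (rule monic_pos) (use degree_monic_char_poly[OF D] delete_no_root[OF st irr] i in auto)
  qed
  finally have "order 1 (pderiv (char_poly Q)) = 0" by (intro order_0I) simp
  then show ?thesis using order_pderiv[OF p0 r1] by simp
qed



lemma re_ge:
  fixes n b r :: real and z :: complex
  assumes b: "0 < b" "b < n" and r: "0 < r" "r \<le> 1" and z: "cmod z = r"
  shows "(1-r)/(n-b*r) \<le> Re ((1 - z) / (of_real n - z * of_real b))"
proof -
  define x where "x = Re z"
  define y where "y = Im z"
  have xy: "x^2 + y^2 = r^2" using z cmod_power2[of z] unfolding x_def y_def by simp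
  have xr: "x \<le> r" using abs_Re_le_cmod[of z] z unfolding x_def by simp
  have xr2: "-r \<le> x" using abs_Re_le_cmod[of z] z unfolding x_def by simp
  have Re1: "Re (1 - z) = 1 - x" "Im (1 - z) = - y" by (simp_all add: x_def y_def)
  have Re2: "Re (of_real n - z * of_real b) = n - b*x" "Im (of_real n - z * of_real b) = - (b*y)"
    by (simp_all add: x_def y_def)
  have nbr: "n - b*r > 0" using b r by (smt (verit) mult_left_le mult_right_le_one_le)
  have bx: "b*x \<le> b*r" using b xr by (simp add: mult_left_mono)
  have D: "(n-b*x)^2 + (-(b*y))^2 > 0"
  proof -
    have "n - b*x > 0" using nbr bx by linarith
    then show ?thesis by (simp add: add_pos_nonneg)
  qed
  have "Re ((1 - z) / (of_real n - z * of_real b)) = ((1-x)*(n-b*x) + (-y)*(-(b*y)))/((n-b*x)^2 + (-(b*y))^2)"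
    unfolding Re_divide Re1 Re2 ..
  moreover have "(1-r)/(n-b*r) \<le> ((1-x)*(n-b*x) + (-y)*(-(b*y)))/((n-b*x)^2 + (-(b*y))^2)"
  proof -
    have id: "((1-x)*(n-b*x) + (-y)*(-(b*y)))*(n-b*r) - (1-r)*((n-b*x)^2 + (-(b*y))^2)
        = (n-b)*(n+b*r)*(r-x)"
    proof -
      have "((1-x)*(n-b*x) + (-y)*(-(b*y)))*(n-b*r) - (1-r)*((n-b*x)^2 + (-(b*y))^2)
        = (n-b)*(n+b*r)*(r-x) + b*(n-b)*(x^2+y^2-r^2)"
        by (simp add: algebra_simps power2_eq_square)
      then show ?thesis using xy by simp
    qed
    have "(n-b)*(n+b*r)*(r-x) \<ge> 0" using b r xr by (intro mult_nonneg_nonneg) auto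
    then have "(1-r)*((n-b*x)^2 + (-(b*y))^2) \<le> ((1-x)*(n-b*x) + (-y)*(-(b*y)))*(n-b*r)"
      using id by linarith
    then show ?thesis using D nbr by (simp add: divide_le_eq le_divide_eq mult.commute)
  qed
  ultimately show ?thesis by simp
qed

lemma abs_le:
  fixes n b r :: real and z :: complex
  assumes b: "0 < b" "b < n" and r: "0 < r" "r \<le> 1" and z: "cmod z = r"
  shows "cmod ((1 - z) / (of_real n - z * of_real b)) \<le> (1+r)/(n+b*r)"
proof -
  define x where "x = Re z"
  define y where "y = Im z"
  have xy: "x^2 + y^2 = r^2" using z cmod_power2[of z] unfolding x_def y_def by simp
  have xr: "x \<le> r" using abs_Re_le_cmod[of z] z unfolding x_def by simp
  have xr2: "-r \<le> x" using abs_Re_le_cmod[of z] z unfolding x_def by simp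
  have nbr: "n - b*r > 0" using b r by (smt (verit) mult_left_le mult_right_le_one_le)
  have bx: "b*x \<le> b*r" using b xr by (simp add: mult_left_mono)
  have c1: "(cmod (1 - z))^2 = (1-x)^2 + y^2" unfolding cmod_power2 by (simp add: x_def y_def mult.commute)
  have c2: "(cmod (of_real n - z * of_real b))^2 = (n-b*x)^2 + (b*y)^2" unfolding cmod_power2 by (simp add: x_def y_def mult.commute)
  have dpos: "cmod (of_real n - z * of_real b) > 0"
  proof -
    have "n - b*x > 0" using nbr bx by linarith
    then have "(n-b*x)^2 + (b*y)^2 > 0" by (simp add: add_pos_nonneg)
    then show ?thesis using c2 by (metis norm_ge_zero order_le_less zero_less_power2 power_zero_numeral zero_power2 less_irrefl)
  qed
  have npos: "n + b*r > 0" using b r by (smt (verit) mult_pos_pos)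
  have id: "(1+r)^2*((n-b*x)^2+(b*y)^2) - ((1-x)^2+y^2)*(n+b*r)^2
     = 2*(n-b)*(n-b*r^2)*(x+r) + ((1+r)^2*b^2-(n+b*r)^2)*(x^2+y^2-r^2)"
    by (simp add: algebra_simps power2_eq_square)
  have brr: "b*r^2 \<le> b" using b r by (simp add: power_le_one)
  have nb2: "n - b*r^2 \<ge> 0" using brr b by linarith
  have "2*(n-b)*(n-b*r^2)*(x+r) \<ge> 0" using b nb2 xr2 by (intro mult_nonneg_nonneg) auto
  then have sq: "((1-x)^2+y^2)*(n+b*r)^2 \<le> (1+r)^2*((n-b*x)^2+(b*y)^2)" using id xy by simp
  have "(cmod (1 - z) * (n+b*r))^2 \<le> ((1+r) * cmod (of_real n - z * of_real b))^2"
    using sq c1 c2 by (simp add: power_mult_distrib)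
  then have "cmod (1 - z) * (n+b*r) \<le> (1+r) * cmod (of_real n - z * of_real b)"
    by (rule power2_le_imp_le) (use r in simp)
  then show ?thesis using dpos npos by (simp add: norm_divide divide_le_eq le_divide_eq mult.commute)
qed



definition gr :: "nat \<Rightarrow> real \<Rightarrow> real \<Rightarrow> real" where
  "gr N r q = (if q = 1 then 1 / real N else (1-r)/(real N - (real N - 2 + 2*q)*r))"
definition gm :: "nat \<Rightarrow> real \<Rightarrow> real \<Rightarrow> real" where
  "gm N r q = (if q = 1 then 1 / real N else (1+r)/(real N + (real N - 2 + 2*q)*r))"

lemma Fq_props:
  assumes N: "N > 8" and q: "-1 \<le> q" "q \<le> 1" and r: "0 < r" "r \<le> 1"
  shows "cmod z = r \<Longrightarrow> gr N r q \<le> Re (Fq N q z)"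
    and "cmod z = r \<Longrightarrow> cmod (Fq N q z) \<le> gm N r q"
    and "Fq N q (of_real r) = of_real (gr N r q)"
    and "Fq N q (of_real (-r)) = of_real (gm N r q)"
    and "0 \<le> gr N r q"
    and "0 \<le> gm N r q"
proof -
  define b where "b = real N - 2 + 2*q"
  have Nr: "real N > 8" using N by simp
  have b: "0 < b" "b \<le> real N" using q Nr unfolding b_def by auto
  have e1: "(of_nat N - 2 + 2 * complex_of_real q) = of_real b" unfolding b_def by simp
  have e2: "(of_nat N :: complex) = of_real (real N)" by simp
  have eqF: "Fq N q z = (1 - z) / (of_real (real N) - z * of_real b)" if "q \<noteq> 1" for z
    unfolding Fq_def e1 if_not_P[OF that] by simp
  have nbr: "real N - b*r > 0" if "q \<noteq> 1"
  proof -
    have "b < real N" using q that unfolding b_def by auto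
    moreover have "b*r \<le> b" using b r by (simp add: mult_left_le)
    ultimately show ?thesis by linarith
  qed
  have nbr2: "real N + b*r > 0" using b r by (simp add: add_pos_pos)
  show "cmod z = r \<Longrightarrow> gr N r q \<le> Re (Fq N q z)"
  proof (cases "q = 1")
    case True then show ?thesis by (simp add: gr_def Fq_def)
  next
    case False
    then have "b < real N" using q unfolding b_def by auto
    moreover assume "cmod z = r"
    ultimately show ?thesis using re_ge[of b "real N" r z] b r False eqF
      unfolding gr_def b_def by simp
  qed
  show "cmod z = r \<Longrightarrow> cmod (Fq N q z) \<le> gm N r q"
  proof (cases "q = 1")
    case True then show ?thesis by (simp add: gm_def Fq_def norm_divide)
  next
    case False
    then have "b < real N" using q unfolding b_def by auto
    moreover assume "cmod z = r"
    ultimately show ?thesis using abs_le[of b "real N" r z] b r False eqF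
      unfolding gm_def b_def by simp
  qed
  show "Fq N q (of_real r) = of_real (gr N r q)"
  proof (cases "q = 1")
    case True then show ?thesis by (simp add: gr_def Fq_def)
  next
    case False
    then show ?thesis using eqF[OF False, of "of_real r"] unfolding gr_def b_def
      by (simp add: mult.commute)
  qed
  show "Fq N q (of_real (-r)) = of_real (gm N r q)"
  proof (cases "q = 1")
    case True then show ?thesis by (simp add: gm_def Fq_def)
  next
    case False
    then show ?thesis using eqF[OF False, of "of_real (-r)"] unfolding gm_def b_def
      by (simp add: mult.commute)
  qed
  show "0 \<le> gr N r q" using nbr r unfolding gr_def b_def by (cases "q=1") auto
  show "0 \<le> gm N r q" using nbr2 r unfolding gm_def b_def by auto
qed



lemma tr_of_real: "tr_fun Q (\<lambda>q. complex_of_real (g q)) = complex_of_real (tr_fun Q g)"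
  unfolding tr_fun_def by (simp add: of_real_sum)

lemma tr_Re: "Re (tr_fun Q f) = tr_fun Q (\<lambda>q. Re (f q))"
  unfolding tr_fun_def by (simp add: Re_sum)

lemma tr_norm: "cmod (tr_fun Q f) \<le> tr_fun Q (\<lambda>q. cmod (f q))"
  unfolding tr_fun_def
proof -
  have "cmod (\<Sum>q\<in>{q. poly (char_poly Q) q = 0}. of_nat (order q (char_poly Q)) * f q)
     \<le> (\<Sum>q\<in>{q. poly (char_poly Q) q = 0}. cmod (of_nat (order q (char_poly Q)) * f q))"
    by (rule norm_sum)
  also have "\<dots> = (\<Sum>q\<in>{q. poly (char_poly Q) q = 0}. of_nat (order q (char_poly Q)) * cmod (f q))"
    by (simp add: norm_mult)
  finally show "cmod (\<Sum>q\<in>{q. poly (char_poly Q) q = 0}. of_nat (order q (char_poly Q)) * f q)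
     \<le> (\<Sum>q\<in>{q. poly (char_poly Q) q = 0}. of_nat (order q (char_poly Q)) * cmod (f q))" .
qed

lemma tr_mono:
  fixes f g :: "real \<Rightarrow> real"
  assumes "\<And>q. poly (char_poly Q) q = 0 \<Longrightarrow> f q \<le> g q"
  shows "tr_fun Q f \<le> tr_fun Q g"
  unfolding tr_fun_def by (rule sum_mono) (use assms in \<open>auto intro: mult_left_mono\<close>)

lemma tr_cong:
  fixes f g :: "real \<Rightarrow> 'b::comm_semiring_1"
  assumes "\<And>q. poly (char_poly Q) q = 0 \<Longrightarrow> f q = g q"
  shows "tr_fun Q f = tr_fun Q g"
  unfolding tr_fun_def by (rule sum.cong) (use assms in auto)

lemma tr_scale:
  fixes f :: "real \<Rightarrow> real"
  shows "tr_fun Q (\<lambda>q. c * f q) = c * tr_fun Q f"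
  unfolding tr_fun_def by (simp add: sum_distrib_left algebra_simps)

theorem lemma3p6:
  fixes N :: nat and Q :: "real mat" and \<epsilon> :: real
  assumes "N > 8"
    and "stochastic_mat N Q"
    and "symmetric_mat N Q"
    and "irreducible_mat N Q"
    and "mat_trace N Q = 0"
    and "0 \<le> \<epsilon>" and "\<epsilon> < real N"
  defines "r \<equiv> 1 - \<epsilon> / real N"
  shows "(\<forall>z. cmod z = r \<longrightarrow> min_value N Q \<epsilon> \<le> cmod (F N Q z) \<and> cmod (F N Q z) \<le> max_value N Q \<epsilon>)
       \<and> cmod (F N Q (complex_of_real r)) = min_value N Q \<epsilon>
       \<and> cmod (F N Q (complex_of_real (- r))) = max_value N Q \<epsilon>"
proof -
  note N = assms(1) and st = assms(2) and irr = assms(4) and eps = assms(6,7)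
  have Nr: "real N > 8" using N by simp
  have r: "0 < r" "r \<le> 1" unfolding r_def using eps Nr by (auto simp: field_simps)
  have qb: "-1 \<le> q" "q \<le> 1" if "poly (char_poly Q) q = 0" for q
    using root_bound[OF st that] by auto
  note FP = Fq_props[OF N qb(1) qb(2) r]
  define A where "A = tr_fun Q (gr N r) / real N"
  define B where "B = tr_fun Q (gm N r) / real N"
  have A0: "A \<ge> 0" unfolding A_def
  proof -
    have "tr_fun Q (\<lambda>_. 0::real) \<le> tr_fun Q (gr N r)" by (rule tr_mono) (use FP in auto)
    then show "0 \<le> tr_fun Q (gr N r) / real N" by (simp add: tr_fun_def)
  qed
  have B0: "B \<ge> 0" unfolding B_def
  proof -
    have "tr_fun Q (\<lambda>_. 0::real) \<le> tr_fun Q (gm N r)" by (rule tr_mono) (use FP in auto)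
    then show "0 \<le> tr_fun Q (gm N r) / real N" by (simp add: tr_fun_def)
  qed
  have FA: "F N Q (complex_of_real r) = complex_of_real A"
  proof -
    have "tr_fun Q (\<lambda>q. Fq N q (complex_of_real r)) = tr_fun Q (\<lambda>q. complex_of_real (gr N r q))"
      by (rule tr_cong) (use FP in auto)
    then show ?thesis unfolding F_def A_def tr_of_real by simp
  qed
  have FB: "F N Q (complex_of_real (-r)) = complex_of_real B"
  proof -
    have "tr_fun Q (\<lambda>q. Fq N q (complex_of_real (-r))) = tr_fun Q (\<lambda>q. complex_of_real (gm N r q))"
      by (rule tr_cong) (use FP in auto)
    then show ?thesis unfolding F_def B_def tr_of_real by simp
  qed
  have low: "A \<le> cmod (F N Q z)" and up: "cmod (F N Q z) \<le> B" if z: "cmod z = r" for z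
  proof -
    have "tr_fun Q (gr N r) \<le> tr_fun Q (\<lambda>q. Re (Fq N q z))" by (rule tr_mono) (use FP z in auto)
    also have "\<dots> = Re (tr_fun Q (\<lambda>q. Fq N q z))" by (simp add: tr_Re)
    finally have "A \<le> Re (F N Q z)" unfolding A_def F_def using Nr by (simp add: divide_right_mono)
    also have "\<dots> \<le> cmod (F N Q z)" by (rule complex_Re_le_cmod)
    finally show "A \<le> cmod (F N Q z)" .
    have "cmod (tr_fun Q (\<lambda>q. Fq N q z)) \<le> tr_fun Q (\<lambda>q. cmod (Fq N q z))" by (rule tr_norm)
    also have "\<dots> \<le> tr_fun Q (gm N r)" by (rule tr_mono) (use FP z in auto)
    finally show "cmod (F N Q z) \<le> B" unfolding B_def F_def using Nr by (simp add: norm_divide divide_right_mono)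
  qed
  have maxv: "max_value N Q \<epsilon> = B"
  proof -
    have "tr_fun Q (\<lambda>q. (2 - \<epsilon> / real N) / (1 + (1 - \<epsilon> / real N) * (1 - 2 / real N + 2 * q / real N)))
        = tr_fun Q (\<lambda>q. real N * gm N r q)"
    proof (rule tr_cong)
      fix q assume "poly (char_poly Q) q = 0"
      note qq = qb[OF this]
      have b: "real N - 2 + 2*q > 0" using qq Nr by linarith
      have "(real N - 2 + 2*q)*r > 0" using b r by simp
      then have pos: "real N + (real N - 2 + 2*q)*r > 0" using Nr by linarith
      have pos2: "1 + r * (1 - 2 / real N + 2 * q / real N) > 0"
      proof -
        have eq: "1 - 2 / real N + 2 * q / real N = (real N - 2 + 2*q) / real N" using Nr by (simp add: field_simps)
        have "r * ((real N - 2 + 2*q) / real N) > 0" using b r Nr by simp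
        then show ?thesis unfolding eq by linarith
      qed
      have "(2 - \<epsilon> / real N) / (1 + r * (1 - 2 / real N + 2 * q / real N)) = real N * gm N r q"
      proof (cases "q = 1")
        case True
        then show ?thesis unfolding gm_def r_def using Nr pos2 True by (simp add: field_simps r_def)
      next
        case False
        then show ?thesis unfolding gm_def using Nr pos pos2 by (simp add: field_simps r_def)
      qed
      then show "(2 - \<epsilon> / real N) / (1 + (1 - \<epsilon> / real N) * (1 - 2 / real N + 2 * q / real N)) = real N * gm N r q"
        unfolding r_def .
    qed
    then show ?thesis unfolding max_value_def B_def tr_scale using Nr by (simp add: power2_eq_square)
  qed
  have minv: "min_value N Q \<epsilon> = A"
  proof (cases "\<epsilon> = 0")
    case True
    then have r1: "r = 1" unfolding r_def by simp
    have fin: "finite {q. poly (char_poly Q) q = 0}"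
      using st degree_monic_char_poly[of Q N] poly_roots_finite unfolding stochastic_mat_def
      by (metis leading_coeff_0_iff zero_neq_one)
    have o1: "order 1 (char_poly Q) = 1" using order_one[OF st irr] N by simp
    have root1: "poly (char_poly Q) 1 = 0" using o1 order_root by fastforce
    have "tr_fun Q (gr N r) = (\<Sum>q\<in>{q. poly (char_poly Q) q = 0}. if q = 1 then real (order q (char_poly Q)) * (1 / real N) else 0)"
      unfolding tr_fun_def r1 gr_def by (intro sum.cong) auto
    also have "\<dots> = 1 / real N" using sum.delta[OF fin, of 1 "\<lambda>q. real (order q (char_poly Q)) * (1 / real N)"] root1 o1 by simp
    finally show ?thesis unfolding A_def min_value_def using True by (simp add: power2_eq_square)
  next
    case False
    then have e: "\<epsilon> > 0" using eps by simp
    have "tr_fun Q (\<lambda>q. \<epsilon> / (2 - 2*q + \<epsilon> - (\<epsilon> / real N) * (2 - 2*q))) = tr_fun Q (\<lambda>q. real N * gr N r q)"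
    proof (rule tr_cong)
      fix q assume "poly (char_poly Q) q = 0"
      note qq = qb[OF this]
      show "\<epsilon> / (2 - 2*q + \<epsilon> - (\<epsilon> / real N) * (2 - 2*q)) = real N * gr N r q"
      proof (cases "q = 1")
        case True
        then show ?thesis unfolding gr_def using Nr e by simp
      next
        case False
        have id: "real N - (real N - 2 + 2*q) * r = (2 - 2*q + \<epsilon> - (\<epsilon> / real N) * (2 - 2*q))"
          unfolding r_def using Nr by (simp add: field_simps)
        have "2 - 2*q + \<epsilon> - (\<epsilon> / real N) * (2 - 2*q) = (2 - 2*q)*(1 - \<epsilon>/real N) + \<epsilon>"
          by (simp add: algebra_simps)
        moreover have "1 - \<epsilon>/real N > 0" using r unfolding r_def by simp
        moreover have "2 - 2*q \<ge> 0" using qq by simp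
        ultimately have pos: "2 - 2*q + \<epsilon> - (\<epsilon> / real N) * (2 - 2*q) > 0" using e
          by (smt (verit) mult_nonneg_nonneg)
        show ?thesis unfolding gr_def using False id pos Nr unfolding r_def by (simp add: field_simps)
      qed
    qed
    then show ?thesis unfolding min_value_def A_def tr_scale using False Nr by (simp add: power2_eq_square)
  qed
  show ?thesis using low up FA FB A0 B0 minv maxv by simp
qed


end
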